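(* Let $\mathbf v$ be a smooth vector field on an open subset of $(0,T)\times\mathbb R^d$ (variables $(t,\mathbf x)$), $\mathbf W:=\frac12(\nabla\mathbf v-(\nabla\mathbf v)^{\mathsf T})$, $\mathbf D:=\frac12(\nabla\mathbf v+(\nabla\mathbf v)^{\mathsf T})$, and let $\mathbf G$ be a smooth $\mathbb R^{d\times d}_{\rm sym}$-valued field with $\mathbf A:=e^{\mathbf G}$. Define the logarithmic rate $\overset{\circ}{\mathbf G}{}^{\log}:=\partial_t\mathbf G+(\mathbf v\cdot\nabla)\mathbf G+2\mathsf{Ad}_{\mathbf G}\boldsymbol\Omega^{\log}$ with $\boldsymbol\Omega^{\log}:=\mathbf W-\mathcal L(\mathsf{Ad}_{\mathbf G})\mathbf D$, where $\mathcal L(x)=\coth x-\frac1x$ for $x\ne0$, $\mathcal L(0)=0$, and the upper-convected rate $\overset{\nabla}{\mathbf A}:=\partial_t\mathbf A+(\mathbf v\cdot\nabla)\mathbf A-(\nabla\mathbf v)\mathbf A-\mathbf A(\nabla\mathbf v)^{\mathsf T}$. Then $\overset{\circ}{\mathbf G}{}^{\log}=2\mathbf D+\frac{d\log\mathbf A}{d\mathbf A}\overset{\nabla}{\mathbf A}$, equivalently $\overset{\nabla}{\mathbf A}=\frac{de^{\mathbf G}}{d\mathbf G}\big(\overset{\circ}{\mathbf G}{}^{\log}-2\mathbf D\big)$.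
   Context: $(\nabla\mathbf v)_{ij}=\partial_{x_j}v_i$. $\mathsf{Ad}_{\mathbf G}\mathbf X=\tfrac12(\mathbf G\mathbf X-\mathbf X\mathbf G)$; for symmetric $\mathbf G=\mathbf Q\operatorname{diag}(g_i)\mathbf Q^{\mathsf T}$ ($\mathbf Q$ orthogonal) and real $h$, $h(\mathsf{Ad}_{\mathbf G})\mathbf X:=\mathbf Q\big([h(\frac{g_i-g_j}2)]\odot(\mathbf Q^{\mathsf T}\mathbf X\mathbf Q)\big)\mathbf Q^{\mathsf T}$ ($\odot$ entrywise product). Matrix exponential/logarithm are defined spectrally. For a $C^1$ function $f$ and symmetric $\mathbf M=\mathbf Q\operatorname{diag}(m_i)\mathbf Q^{\mathsf T}$, $\frac{df(\mathbf M)}{d\mathbf M}\mathbf X:=\mathbf Q\big([F(m_i,m_j)]\odot(\mathbf Q^{\mathsf T}\mathbf X\mathbf Q)\big)\mathbf Q^{\mathsf T}$ with $F(x,y)=\frac{f(x)-f(y)}{x-y}$ ($x\ne y$), $F(x,x)=f'(x)$ (the Fréchet derivative of the matrix function). *)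

theory Defs
  imports "HOL-Analysis.Analysis"
begin

type_synonym 'n mat = "real^'n^'n"

definition diag_mat :: "real^('n::finite) \<Rightarrow> ('n::finite) mat" where
  "diag_mat g = (\<chi> i j. if i = j then g $ i else 0)"

definition sym_mat :: "('n::finite) mat \<Rightarrow> bool" where
  "sym_mat M \<longleftrightarrow> transpose M = M"

definition spec_decomp :: "('n::finite) mat \<Rightarrow> ('n::finite) mat \<times> (real^('n::finite))" where
  "spec_decomp M = (SOME (Q, m). orthogonal_matrix Q \<and> M = Q ** diag_mat m ** transpose Q)"

definition spec_apply2 :: "(real \<Rightarrow> real \<Rightarrow> real) \<Rightarrow> ('n::finite) mat \<Rightarrow> ('n::finite) mat \<Rightarrow> ('n::finite) mat" where
  "spec_apply2 F M X = (case spec_decomp M of (Q, m) \<Rightarrow>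
      Q ** (\<chi> i j. F (m $ i) (m $ j) * (transpose Q ** X ** Q) $ i $ j) ** transpose Q)"

definition mat_fun :: "(real \<Rightarrow> real) \<Rightarrow> ('n::finite) mat \<Rightarrow> ('n::finite) mat" where
  "mat_fun f M = (case spec_decomp M of (Q, m) \<Rightarrow>
      Q ** diag_mat (\<chi> i. f (m $ i)) ** transpose Q)"

definition mat_exp :: "('n::finite) mat \<Rightarrow> ('n::finite) mat" where
  "mat_exp M = mat_fun exp M"

definition mat_log :: "('n::finite) mat \<Rightarrow> ('n::finite) mat" where
  "mat_log M = mat_fun ln M"

definition Ad :: "('n::finite) mat \<Rightarrow> ('n::finite) mat \<Rightarrow> ('n::finite) mat" where
  "Ad G X = (1/2) *\<^sub>R (G ** X - X ** G)"

text \<open>h(Ad_G) X.\<close>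
definition Ad_fun :: "(real \<Rightarrow> real) \<Rightarrow> ('n::finite) mat \<Rightarrow> ('n::finite) mat \<Rightarrow> ('n::finite) mat" where
  "Ad_fun h G X = spec_apply2 (\<lambda>a b. h ((a - b) / 2)) G X"

definition divdiff :: "(real \<Rightarrow> real) \<Rightarrow> real \<Rightarrow> real \<Rightarrow> real" where
  "divdiff f x y = (if x \<noteq> y then (f x - f y) / (x - y) else deriv f x)"

text \<open>Frechet derivative df(M)/dM applied to X, as in the paper.\<close>
definition dmat_fun :: "(real \<Rightarrow> real) \<Rightarrow> ('n::finite) mat \<Rightarrow> ('n::finite) mat \<Rightarrow> ('n::finite) mat" where
  "dmat_fun f M X = spec_apply2 (divdiff f) M X"

definition langevin :: "real \<Rightarrow> real" where
  "langevin x = (if x = 0 then 0 else cosh x / sinh x - 1 / x)"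

fun Ck_on :: "nat \<Rightarrow> ('a::real_normed_vector \<Rightarrow> 'b::real_normed_vector) \<Rightarrow> 'a set \<Rightarrow> bool" where
  "Ck_on 0 f U = continuous_on U f"
| "Ck_on (Suc k) f U = (f differentiable_on U \<and> continuous_on U f \<and>
      (\<forall>h. Ck_on k (\<lambda>y. frechet_derivative f (at y) h) U))"

definition smooth_on :: "('a::real_normed_vector \<Rightarrow> 'b::real_normed_vector) \<Rightarrow> 'a set \<Rightarrow> bool" where
  "smooth_on f U \<longleftrightarrow> (\<forall>k. Ck_on k f U)"

definition grad_v :: "(real \<times> (real^('n::finite)) \<Rightarrow> real^('n::finite)) \<Rightarrow> real \<times> (real^('n::finite)) \<Rightarrow> ('n::finite) mat" where
  "grad_v v p = (\<chi> i j. frechet_derivative v (at p) (0, axis j 1) $ i)"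

definition dt :: "(real \<times> (real^('n::finite)) \<Rightarrow> 'b::real_normed_vector) \<Rightarrow> real \<times> (real^('n::finite)) \<Rightarrow> 'b" where
  "dt F p = frechet_derivative F (at p) (1, 0)"

definition convect :: "(real \<times> (real^('n::finite)) \<Rightarrow> real^('n::finite)) \<Rightarrow> (real \<times> (real^('n::finite)) \<Rightarrow> 'b::real_normed_vector)
    \<Rightarrow> real \<times> (real^('n::finite)) \<Rightarrow> 'b" where
  "convect v F p = frechet_derivative F (at p) (0, v p)"

end

theory Submission
  imports Defs
begin


lemma matrix_add_rdistrib': "((A::real^'n^'m) + B) ** C = A ** C + B ** C"
  by (vector matrix_matrix_mult_def sum.distrib[symmetric] field_simps)

lemma sym_inner:
  fixes M :: "real^'n^'n"
  assumes "sym_mat M" shows "(M *v x) \<bullet> y = x \<bullet> (M *v y)"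
proof -
  have "M *v x = x v* M" using assms transpose_matrix_vector[of M x] by (simp add: sym_mat_def)
  then show ?thesis by (simp add: dot_lmul_matrix)
qed

lemma quad_nonpos_imp_zero:
  fixes a c :: real assumes "\<And>t. 2*t*a + t^2*c \<le> 0" shows "a = 0"
proof (rule ccontr)
  assume "a \<noteq> 0"
  define t where "t = a / (c^2 + 1)"
  have pos: "c^2 + 1 > 0" by (simp add: add_nonneg_pos)
  have a: "a = t * (c^2+1)" using pos by (simp add: t_def)
  have "2*t*a + t^2*c = t^2 * (2*c^2 + c + 2)"
    by (simp add: a algebra_simps power2_eq_square)
  moreover have "2*c^2 + c + 2 > 0"
  proof -
    have "2*c^2 + c + 2 = 2*(c+1/4)^2 + 15/8" by (simp add: power2_eq_square algebra_simps)
    then show ?thesis by (metis add_nonneg_pos zero_le_power2 mult_nonneg_nonneg zero_le_numeral divide_pos_pos zero_less_numeral)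
  qed
  moreover have "t \<noteq> 0" using \<open>a \<noteq> 0\<close> a by auto
  ultimately have "2*t*a + t^2*c > 0" by simp
  then show False using assms[of t] by linarith
qed

lemma sym_eigvec_exists:
  fixes M :: "real^'n^'n" and S :: "(real^'n) set"
  assumes sym: "sym_mat M" and eig: "\<forall>s\<in>S. \<exists>c. M *v s = c *\<^sub>R s"
    and nz: "x \<noteq> 0" "\<forall>s\<in>S. x \<bullet> s = 0"
  shows "\<exists>u. norm u = 1 \<and> (\<forall>s\<in>S. u \<bullet> s = 0) \<and> (\<exists>c. M *v u = c *\<^sub>R u)"
proof -
  define V where "V = {y. \<forall>s\<in>S. y \<bullet> s = 0}"
  define K where "K = sphere 0 1 \<inter> V"
  define f where "f y = y \<bullet> (M *v y)" for y
  have V_eq: "V = (\<Inter>s\<in>S. {y. s \<bullet> y = 0})" by (auto simp: V_def inner_commute)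
  have "closed V" unfolding V_eq by (intro closed_INT ballI closed_hyperplane)
  then have "compact K" unfolding K_def by (intro compact_Int_closed) auto
  have "x /\<^sub>R norm x \<in> K" using nz by (auto simp: K_def V_def)
  then have "K \<noteq> {}" by auto
  have "continuous_on K f" unfolding f_def
    by (intro continuous_intros linear_continuous_on matrix_vector_mul_bounded_linear)
  obtain u where uK: "u \<in> K" and umax: "\<And>y. y \<in> K \<Longrightarrow> f y \<le> f u"
    using continuous_attains_sup[OF \<open>compact K\<close> \<open>K \<noteq> {}\<close> \<open>continuous_on K f\<close>] by blast
  define l where "l = f u"
  have u1: "norm u = 1" and uV: "u \<in> V" using uK by (auto simp: K_def)
  have uu: "u \<bullet> u = 1" using u1 by (simp add: norm_eq_1)
  have Vadd: "y + z \<in> V" if "y \<in> V" "z \<in> V" for y z using that by (auto simp: V_def inner_add_left)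
  have Vscale: "c *\<^sub>R y \<in> V" if "y \<in> V" for c y using that by (auto simp: V_def)
  have fscale: "f (c *\<^sub>R y) = c^2 * f y" for c y
    by (simp add: f_def matrix_vector_mult_scaleR power2_eq_square)
  have hom: "f y \<le> l * (norm y)^2" if "y \<in> V" for y
  proof (cases "y = 0")
    case True then show ?thesis by (simp add: f_def)
  next
    case False
    have "y /\<^sub>R norm y \<in> K" using False that Vscale by (auto simp: K_def)
    then have "f (y /\<^sub>R norm y) \<le> l" using umax l_def by blast
    moreover have e: "f y = (norm y)^2 * f (y /\<^sub>R norm y)"
      using fscale[of "norm y" "y /\<^sub>R norm y"] False by simp
    ultimately have "f y \<le> (norm y)^2 * l" by (metis mult_left_mono zero_le_power2)
    then show ?thesis by (simp add: mult.commute)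
  qed
  have A: "w \<bullet> (M *v u) = 0" if "w \<in> V" "w \<bullet> u = 0" for w
  proof (rule quad_nonpos_imp_zero[where c = "w \<bullet> (M *v w) - l * (w \<bullet> w)"])
    fix t :: real
    have "u + t *\<^sub>R w \<in> V" using uV that Vadd Vscale by blast
    then have "f (u + t *\<^sub>R w) \<le> l * (norm (u + t *\<^sub>R w))^2" by (rule hom)
    moreover have "(norm (u + t *\<^sub>R w))^2 = 1 + t^2 * (w \<bullet> w)"
    proof -
      have "(norm (u + t *\<^sub>R w))^2 = (u + t *\<^sub>R w) \<bullet> (u + t *\<^sub>R w)" by (rule power2_norm_eq_inner)
      also have "\<dots> = 1 + t^2 * (w \<bullet> w)"
        using uu that(2) by (simp add: inner_add_left inner_add_right inner_commute power2_eq_square)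
      finally show ?thesis .
    qed
    moreover have "f (u + t *\<^sub>R w) = l + 2*t*(w \<bullet> (M *v u)) + t^2 * (w \<bullet> (M *v w))"
    proof -
      have "u \<bullet> (M *v w) = w \<bullet> (M *v u)" using sym_inner[OF sym, of u w] by (simp add: inner_commute)
      then show ?thesis
        by (simp add: f_def l_def matrix_vector_right_distrib matrix_vector_mult_scaleR inner_add_left inner_add_right
            power2_eq_square algebra_simps)
    qed
    ultimately show "2*t*(w \<bullet> (M *v u)) + t^2 * (w \<bullet> (M *v w) - l * (w \<bullet> w)) \<le> 0"
      by (simp add: algebra_simps)
  qed
  have B: "M *v u \<in> V"
  proof -
    have "(M *v u) \<bullet> s = 0" if sS: "s \<in> S" for s
    proof -
      obtain c where "M *v s = c *\<^sub>R s" using bspec[OF eig sS] by blast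
      then have "(M *v u) \<bullet> s = c * (u \<bullet> s)" unfolding sym_inner[OF sym, of u s] by simp
      then show ?thesis using uV sS unfolding V_def by simp
    qed
    then show ?thesis by (simp add: V_def)
  qed
  define w where "w = M *v u - l *\<^sub>R u"
  have "M *v u + (-l) *\<^sub>R u \<in> V" by (rule Vadd[OF B Vscale[OF uV]])
  moreover have "w = M *v u + (-l) *\<^sub>R u" by (simp add: w_def)
  ultimately have wV: "w \<in> V" by simp
  have wu: "w \<bullet> u = 0" unfolding w_def using uu by (simp add: l_def f_def inner_diff_left inner_diff_right inner_commute[of "M *v u" u])
  have "w \<bullet> (M *v u) = 0" by (rule A[OF wV wu])
  then have "w \<bullet> w = 0" using wu by (simp add: w_def inner_diff_left inner_diff_right inner_commute)
  then have "M *v u = l *\<^sub>R u" by (simp add: w_def)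
  then show ?thesis using u1 uV by (auto simp: V_def)
qed

lemma sym_orthonormal_eigenset:
  fixes M :: "real^'n^'n"
  assumes sym: "sym_mat M" and "k \<le> CARD('n)"
  shows "\<exists>S. card S = k \<and> finite S \<and> pairwise orthogonal S \<and> (\<forall>s\<in>S. norm s = 1 \<and> (\<exists>c. M *v s = c *\<^sub>R s))"
  using assms(2)
proof (induction k)
  case 0 show ?case by (intro exI[of _ "{}"]) auto
next
  case (Suc k)
  then obtain S where S: "card S = k" "finite S" "pairwise orthogonal S"
      "\<forall>s\<in>S. norm s = 1 \<and> (\<exists>c. M *v s = c *\<^sub>R s)" by auto
  have "0 \<notin> S" using S(4) by force
  then have indep: "independent S" using pairwise_orthogonal_independent[OF S(3)] by blast
  have "span S \<noteq> UNIV"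
  proof
    assume "span S = UNIV"
    then have "dim (span S) = CARD('n)" by (simp add: dim_UNIV)
    moreover have "dim (span S) = k" using indep S(1) by (simp add: dim_span dim_eq_card_independent)
    ultimately show False using Suc.prems by simp
  qed
  then have "span S \<subset> span UNIV" by auto
  then obtain x where x: "x \<noteq> 0" "\<And>y. y \<in> span S \<Longrightarrow> orthogonal x y"
    using orthogonal_to_subspace_exists_gen by blast
  have xS: "\<forall>s\<in>S. x \<bullet> s = 0" using x(2) span_base by (auto simp: orthogonal_def)
  obtain u where u: "norm u = 1" "\<forall>s\<in>S. u \<bullet> s = 0" "\<exists>c. M *v u = c *\<^sub>R u"
    using sym_eigvec_exists[OF sym _ x(1) xS] S(4) by blast
  have "u \<notin> S" using u(1,2) by (metis inner_eq_zero_iff norm_zero zero_neq_one)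
  show ?case
  proof (intro exI[of _ "insert u S"] conjI)
    show "card (insert u S) = Suc k" using S(1,2) \<open>u \<notin> S\<close> by simp
    show "finite (insert u S)" using S(2) by simp
    show "pairwise orthogonal (insert u S)"
      using S(3) u(2) by (auto simp: pairwise_insert orthogonal_def inner_commute)
    show "\<forall>s\<in>insert u S. norm s = 1 \<and> (\<exists>c. M *v s = c *\<^sub>R s)" using S(4) u(1,3) by auto
  qed
qed

lemma spectral_exists:
  fixes M :: "real^'n^'n"
  assumes sym: "sym_mat M"
  shows "\<exists>Q m. orthogonal_matrix Q \<and> M = Q ** diag_mat m ** transpose Q"
proof -
  obtain S where S: "card S = CARD('n)" "finite S" "pairwise orthogonal S"
      "\<forall>s\<in>S. norm s = 1 \<and> (\<exists>c. M *v s = c *\<^sub>R s)"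
    using sym_orthonormal_eigenset[OF sym order.refl] by blast
  obtain f where f: "bij_betw f (UNIV::'n set) S"
    using finite_same_card_bij[of "UNIV::'n set" S] S(1,2) by auto
  have fS: "f i \<in> S" for i using f by (auto simp: bij_betw_def)
  have [simp]: "norm (f i) = 1" for i using fS S(4) by blast
  have [simp]: "orthogonal (f i) (f j)" if "i \<noteq> j" for i j
    using S(3) f that by (auto simp: pairwise_def bij_betw_def inj_on_def)
  define Q where "Q = (\<chi> i j. f j $ i)"
  have orthQ: "orthogonal_matrix Q"
    by (simp add: orthogonal_matrix_orthonormal_columns column_def Q_def)
  define m where "m = (\<chi> j. SOME c. M *v f j = c *\<^sub>R f j)"
  have eig: "M *v f j = m$j *\<^sub>R f j" for j
  proof -
    have "\<exists>c. M *v f j = c *\<^sub>R f j" using fS S(4) by blast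
    from someI_ex[OF this] show ?thesis by (simp add: m_def)
  qed
  have MQ: "M ** Q = Q ** diag_mat m"
  proof -
    have "(M ** Q) $ i $ j = (Q ** diag_mat m) $ i $ j" for i j
    proof -
      have "(M ** Q) $ i $ j = (M *v f j) $ i"
        by (simp add: matrix_matrix_mult_def matrix_vector_mult_def Q_def)
      also have "\<dots> = m$j * f j $ i" by (simp add: eig)
      also have "\<dots> = (Q ** diag_mat m) $ i $ j"
        by (simp add: matrix_matrix_mult_def diag_mat_def Q_def if_distrib if_distribR sum.delta' cong: if_cong)
      finally show ?thesis .
    qed
    then show ?thesis by (simp add: vec_eq_iff)
  qed
  have "M = M ** (Q ** transpose Q)" using orthQ by (simp add: orthogonal_matrix_def)
  also have "\<dots> = Q ** diag_mat m ** transpose Q" by (simp add: matrix_mul_assoc MQ)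
  finally show ?thesis using orthQ by blast
qed

lemma spec_decomp_props:
  fixes M :: "real^'n^'n"
  assumes "sym_mat M"
  shows "orthogonal_matrix (fst (spec_decomp M)) \<and>
         M = fst (spec_decomp M) ** diag_mat (snd (spec_decomp M)) ** transpose (fst (spec_decomp M))"
proof -
  have "\<exists>x. orthogonal_matrix (fst x) \<and> M = fst x ** diag_mat (snd x) ** transpose (fst x)"
    using spectral_exists[OF assms] by auto
  moreover have "spec_decomp M = (SOME x. orthogonal_matrix (fst x) \<and> M = fst x ** diag_mat (snd x) ** transpose (fst x))"
    unfolding spec_decomp_def by (rule arg_cong[where f=Eps]) (simp add: fun_eq_iff split_beta)
  ultimately show ?thesis using someI_ex by (simp only:) (rule someI_ex)
qed



lemma diag_mult_left_entry: "(diag_mat d ** A) $ i $ j = d$i * A$i$j"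
  by (simp add: matrix_matrix_mult_def diag_mat_def if_distrib if_distribR sum.delta cong: if_cong)

lemma diag_mult_right_entry: "(A ** diag_mat d) $ i $ j = A$i$j * d$j"
  by (simp add: matrix_matrix_mult_def diag_mat_def if_distrib if_distribR sum.delta' cong: if_cong)

lemma transpose_diag_mat [simp]: "transpose (diag_mat d) = diag_mat d"
  by (simp add: transpose_def diag_mat_def vec_eq_iff)

lemma decomp_sym:
  fixes Q :: "real^'n^'n"
  assumes "M = Q ** diag_mat m ** transpose Q" shows "sym_mat M"
  using assms by (simp add: sym_mat_def matrix_transpose_mul matrix_mul_assoc)

lemma orth_simps:
  fixes Q :: "real^'n^'n"
  assumes "orthogonal_matrix Q"
  shows "transpose Q ** Q = mat 1" "Q ** transpose Q = mat 1"
    "transpose Q ** (Q ** A) = A" "Q ** (transpose Q ** A) = A"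
  using assms by (simp_all add: orthogonal_matrix_def matrix_mul_assoc)

lemma conj_commute_entry:
  fixes R Y :: "real^'n^'n"
  assumes comm: "\<And>i j. mu$i * R$i$j = R$i$j * m$j"
  shows "(\<chi> i k. F (mu$i) (mu$k) * (R ** Y ** transpose R)$i$k)
       = R ** (\<chi> j l. F (m$j) (m$l) * Y$j$l) ** transpose R"
proof -
  have "F (mu$i) (mu$k) * (R ** Y ** transpose R)$i$k
      = (R ** (\<chi> j l. F (m$j) (m$l) * Y$j$l) ** transpose R)$i$k" for i k
  proof -
    have e1: "(R ** Y ** transpose R)$i$k = (\<Sum>l\<in>UNIV. \<Sum>j\<in>UNIV. R$i$j * Y$j$l * R$k$l)"
      by (simp add: matrix_matrix_mult_def transpose_def sum_distrib_right)
    have e2: "(R ** (\<chi> j l. F (m$j) (m$l) * Y$j$l) ** transpose R)$i$k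
        = (\<Sum>l\<in>UNIV. \<Sum>j\<in>UNIV. R$i$j * (F (m$j) (m$l) * Y$j$l) * R$k$l)"
      by (simp add: matrix_matrix_mult_def transpose_def sum_distrib_right)
    have t: "F (mu$i) (mu$k) * (R$i$j * Y$j$l * R$k$l) = R$i$j * (F (m$j) (m$l) * Y$j$l) * R$k$l" for j l
    proof (cases "R$i$j = 0 \<or> R$k$l = 0")
      case True then show ?thesis by auto
    next
      case False
      then have "mu$i = m$j" "mu$k = m$l" using comm[of i j] comm[of k l] by (auto simp: mult.commute)
      then show ?thesis by simp
    qed
    show ?thesis unfolding e1 e2 sum_distrib_left using t by (intro sum.cong refl) auto
  qed
  then show ?thesis by (simp add: vec_eq_iff)
qed

lemma spec_apply2_eq:
  fixes M Q :: "real^'n^'n"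
  assumes oQ: "orthogonal_matrix Q" and M: "M = Q ** diag_mat m ** transpose Q"
  shows "spec_apply2 F M X = Q ** (\<chi> i j. F (m$i) (m$j) * (transpose Q ** X ** Q)$i$j) ** transpose Q"
proof -
  have sym: "sym_mat M" using decomp_sym[OF M] .
  obtain P mu where sd: "spec_decomp M = (P, mu)" by (cases "spec_decomp M") auto
  have oP: "orthogonal_matrix P" and MP: "M = P ** diag_mat mu ** transpose P"
    using spec_decomp_props[OF sym] sd by auto
  define R where "R = transpose P ** Q"
  have "transpose P ** M ** Q = diag_mat mu ** R"
    unfolding MP R_def using oP by (simp add: matrix_mul_assoc orth_simps)
  moreover have "transpose P ** M ** Q = R ** diag_mat m"
    unfolding M R_def using oQ by (simp add: matrix_mul_assoc[symmetric] orth_simps)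
  ultimately have DR: "diag_mat mu ** R = R ** diag_mat m" by simp
  have comm: "mu$i * R$i$j = R$i$j * m$j" for i j
    using arg_cong[OF DR, of "\<lambda>A. A$i$j"] by (simp add: diag_mult_left_entry diag_mult_right_entry)
  define Y where "Y = transpose Q ** X ** Q"
  have PXP: "transpose P ** X ** P = R ** Y ** transpose R"
    unfolding R_def Y_def using oQ
    by (simp add: matrix_transpose_mul matrix_mul_assoc orth_simps)
       (simp add: matrix_mul_assoc[symmetric] orth_simps)
  have PR: "P ** R = Q" unfolding R_def using oP by (simp add: matrix_mul_assoc orth_simps)
  have "spec_apply2 F M X = P ** (\<chi> i j. F (mu$i) (mu$j) * (R ** Y ** transpose R)$i$j) ** transpose P"
    unfolding spec_apply2_def sd PXP[symmetric] by simp
  also have "\<dots> = P ** (R ** (\<chi> j l. F (m$j) (m$l) * Y$j$l) ** transpose R) ** transpose P"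
    by (simp add: conj_commute_entry[OF comm])
  also have "\<dots> = (P ** R) ** (\<chi> j l. F (m$j) (m$l) * Y$j$l) ** transpose (P ** R)"
    by (simp add: matrix_mul_assoc matrix_transpose_mul)
  finally show ?thesis by (simp add: PR Y_def)
qed

lemma mat_fun_eq:
  fixes M Q :: "real^'n^'n"
  assumes oQ: "orthogonal_matrix Q" and M: "M = Q ** diag_mat m ** transpose Q"
  shows "mat_fun f M = Q ** diag_mat (\<chi> i. f (m$i)) ** transpose Q"
proof -
  have sym: "sym_mat M" using decomp_sym[OF M] .
  obtain P mu where sd: "spec_decomp M = (P, mu)" by (cases "spec_decomp M") auto
  have oP: "orthogonal_matrix P"
    using spec_decomp_props[OF sym] sd by auto
  have dg: "(\<chi> i j. g (d$i) * (mat 1 :: real^'n^'n)$i$j) = diag_mat (\<chi> i. g (d$i))" for g and d :: "real^'n"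
    by (simp add: vec_eq_iff mat_def diag_mat_def)
  have "mat_fun f M = spec_apply2 (\<lambda>a b. f a) M (mat 1)"
    unfolding mat_fun_def spec_apply2_def sd using oP by (simp add: orth_simps dg)
  also have "\<dots> = Q ** diag_mat (\<chi> i. f (m$i)) ** transpose Q"
    unfolding spec_apply2_eq[OF oQ M] using oQ by (simp add: orth_simps dg)
  finally show ?thesis .
qed



lemma conj_mult:
  fixes Q :: "real^'n^'n"
  assumes "orthogonal_matrix Q"
  shows "(Q ** A ** transpose Q) ** (Q ** B ** transpose Q) = Q ** (A ** B) ** transpose Q"
proof -
  have "(Q ** A ** transpose Q) ** (Q ** B ** transpose Q) = Q ** A ** (transpose Q ** Q) ** B ** transpose Q"
    by (simp only: matrix_mul_assoc)
  also have "\<dots> = Q ** (A ** B) ** transpose Q" using assms by (simp add: orthogonal_matrix_def matrix_mul_assoc)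
  finally show ?thesis .
qed

definition mb :: "'n::finite \<Rightarrow> 'n \<Rightarrow> real^'n^'n" where
  "mb i j = (\<chi> a b. if a = i \<and> b = j then 1 else 0)"

lemma mat_expand: "(A::real^'n^'n) = (\<Sum>i\<in>UNIV. \<Sum>j\<in>UNIV. A$i$j *\<^sub>R mb i j)"
proof -
  have "(\<Sum>a\<in>UNIV. \<Sum>b\<in>UNIV. A$a$b *\<^sub>R mb a b) $ i $ j = A$i$j" for i j
  proof -
    have "(\<Sum>a\<in>UNIV. \<Sum>b\<in>UNIV. A$a$b *\<^sub>R mb a b) $ i $ j
        = (\<Sum>a\<in>UNIV. if a = i then (\<Sum>b\<in>UNIV. if b = j then A$a$b else 0) else 0)"
      unfolding sum_component by (intro sum.cong refl) (auto simp: mb_def mult.commute[of _ "if _ then _ else _"] if_distrib sum.delta cong: if_cong)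
    also have "\<dots> = A$i$j" by simp
    finally show ?thesis .
  qed
  then show ?thesis by (simp add: vec_eq_iff)
qed

lemma mat_vector_derivative:
  fixes f :: "real \<Rightarrow> real^'n^'n"
  assumes "\<And>i j. ((\<lambda>s. f s $ i $ j) has_real_derivative (f' $ i $ j)) (at t within T)"
  shows "(f has_vector_derivative f') (at t within T)"
proof -
  have "((\<lambda>s. \<Sum>i\<in>UNIV. \<Sum>j\<in>UNIV. f s $i$j *\<^sub>R mb i j) has_vector_derivative
        (\<Sum>i\<in>UNIV. \<Sum>j\<in>UNIV. f' $i$j *\<^sub>R mb i j)) (at t within T)"
    by (intro has_vector_derivative_sum) (use assms in \<open>auto intro!: derivative_eq_intros\<close>)
  then show ?thesis by (simp flip: mat_expand)
qed

lemma bl_lmul: fixes A :: "real^'n^'n" shows "bounded_linear (\<lambda>Z::real^'n^'n. A ** Z)"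
  by (subst linear_conv_bounded_linear[symmetric], rule linearI)
     (simp_all add: matrix_add_ldistrib matrix_scalar_ac scalar_matrix_assoc)

lemma bl_rmul: fixes B :: "real^'n^'n" shows "bounded_linear (\<lambda>Z::real^'n^'n. Z ** B)"
  by (subst linear_conv_bounded_linear[symmetric], rule linearI)
     (simp_all add: matrix_add_rdistrib' scalar_matrix_assoc)

lemma bl_conj: fixes A B :: "real^'n^'n" shows "bounded_linear (\<lambda>Z::real^'n^'n. A ** Z ** B)"
  using bounded_linear_compose[OF bl_rmul[of B] bl_lmul[of A]] by simp

lemma bl_hadamard: "bounded_linear (\<lambda>Z::real^'n^'n. (\<chi> i j. F i j * Z$i$j))"
  by (subst linear_conv_bounded_linear[symmetric], rule linearI) (simp_all add: vec_eq_iff algebra_simps)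

lemma bbl_mult: "bounded_bilinear (\<lambda>A B::real^'n^'n. A ** B)"
  by (subst bilinear_conv_bounded_bilinear[symmetric])
     (auto simp: bilinear_def intro!: linearI simp: matrix_add_ldistrib matrix_add_rdistrib'
       matrix_scalar_ac scalar_matrix_assoc)

lemma bl_spec_apply2: "bounded_linear (spec_apply2 F (M::real^'n^'n))"
proof -
  obtain P mu where sd: "spec_decomp M = (P, mu)" by (rule prod.exhaust)
  have l1: "bounded_linear (\<lambda>X. transpose P ** X ** P)" by (rule bl_conj)
  have l2: "bounded_linear (\<lambda>Z::real^'n^'n. (\<chi> i j. F (mu$i) (mu$j) * Z$i$j))" by (rule bl_hadamard)
  have l3: "bounded_linear (\<lambda>Z. P ** Z ** transpose P)" by (rule bl_conj)
  have "bounded_linear ((\<lambda>Z. P ** Z ** transpose P) \<circ> ((\<lambda>Z. (\<chi> i j. F (mu$i) (mu$j) * Z$i$j)) \<circ> (\<lambda>X. transpose P ** X ** P)))"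
    unfolding o_def by (rule bounded_linear_compose[OF l3 bounded_linear_compose[OF l2 l1]])
  moreover have "spec_apply2 F M = ((\<lambda>Z. P ** Z ** transpose P) \<circ> ((\<lambda>Z. (\<chi> i j. F (mu$i) (mu$j) * Z$i$j)) \<circ> (\<lambda>X. transpose P ** X ** P)))"
    by (simp add: fun_eq_iff spec_apply2_def sd)
  ultimately show ?thesis by simp
qed

lemma diag_mult: "diag_mat d ** diag_mat e = diag_mat (\<chi> i. d$i * e$i)"
  by (simp add: vec_eq_iff diag_mult_left_entry) (simp add: diag_mat_def)

lemma diag_scale: "diag_mat (c *\<^sub>R d) = c *\<^sub>R diag_mat d"
  by (simp add: vec_eq_iff diag_mat_def)

lemma decomp_scale:
  fixes Q :: "real^'n^'n"
  assumes "X = Q ** diag_mat x ** transpose Q"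
  shows "c *\<^sub>R X = Q ** diag_mat (c *\<^sub>R x) ** transpose Q"
  using assms by (simp add: diag_scale matrix_scalar_ac scalar_matrix_assoc)

lemma sym_decomp:
  fixes X :: "real^'n^'n"
  assumes "sym_mat X"
  obtains Q x where "orthogonal_matrix Q" "X = Q ** diag_mat x ** transpose Q"
  using spec_decomp_props[OF assms] by blast

lemma exp_rep:
  fixes Q :: "real^'n^'n"
  assumes "orthogonal_matrix Q" "X = Q ** diag_mat x ** transpose Q"
  shows "mat_exp X = Q ** diag_mat (\<chi> i. exp (x$i)) ** transpose Q"
  using mat_fun_eq[OF assms] by (simp add: mat_exp_def)

lemma exp_zero_scale:
  fixes X :: "real^'n^'n"
  assumes "sym_mat X"
  shows "mat_exp (0 *\<^sub>R X) = mat 1"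
proof -
  obtain Q x where Q: "orthogonal_matrix Q" "X = Q ** diag_mat x ** transpose Q" using sym_decomp[OF assms] .
  have "mat_exp (0 *\<^sub>R X) = Q ** diag_mat (\<chi> i. exp ((0 *\<^sub>R x)$i)) ** transpose Q"
    by (rule exp_rep[OF Q(1) decomp_scale[OF Q(2)]])
  also have "diag_mat (\<chi> i. exp ((0 *\<^sub>R x)$i)) = mat 1" by (simp add: vec_eq_iff diag_mat_def mat_def)
  finally show ?thesis using Q(1) by (simp add: orth_simps)
qed

lemma exp_ray_deriv:
  fixes X :: "real^'n^'n"
  assumes "sym_mat X"
  shows "((\<lambda>s. mat_exp ((a * s + b) *\<^sub>R X)) has_vector_derivative
           (a *\<^sub>R (mat_exp ((a * t + b) *\<^sub>R X) ** X))) (at t within T)"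
    and "mat_exp (c *\<^sub>R X) ** X = X ** mat_exp (c *\<^sub>R X)"
proof -
  obtain Q x where Q: "orthogonal_matrix Q" "X = Q ** diag_mat x ** transpose Q" using sym_decomp[OF assms] .
  have rep: "mat_exp (c *\<^sub>R X) = Q ** diag_mat (\<chi> i. exp (c * x$i)) ** transpose Q" for c
    using exp_rep[OF Q(1) decomp_scale[OF Q(2)]] by simp
  have prodr: "mat_exp (c *\<^sub>R X) ** X = Q ** diag_mat (\<chi> i. exp (c * x$i) * x$i) ** transpose Q" for c
  proof -
    have "mat_exp (c *\<^sub>R X) ** X = (Q ** diag_mat (\<chi> i. exp (c * x$i)) ** transpose Q) ** (Q ** diag_mat x ** transpose Q)"
      by (simp only: rep Q(2)[symmetric])
    also have "\<dots> = Q ** diag_mat (\<chi> i. exp (c * x$i) * x$i) ** transpose Q"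
      by (simp add: conj_mult[OF Q(1)] diag_mult)
    finally show ?thesis .
  qed
  have prodl: "X ** mat_exp (c *\<^sub>R X) = Q ** diag_mat (\<chi> i. exp (c * x$i) * x$i) ** transpose Q" for c
  proof -
    have "X ** mat_exp (c *\<^sub>R X) = (Q ** diag_mat x ** transpose Q) ** (Q ** diag_mat (\<chi> i. exp (c * x$i)) ** transpose Q)"
      by (simp only: rep Q(2)[symmetric])
    also have "\<dots> = Q ** diag_mat (\<chi> i. exp (c * x$i) * x$i) ** transpose Q"
      by (simp add: conj_mult[OF Q(1)] diag_mult mult.commute)
    finally show ?thesis .
  qed
  show "mat_exp (c *\<^sub>R X) ** X = X ** mat_exp (c *\<^sub>R X)" using prodr prodl by simp
  have inner: "((\<lambda>s. diag_mat (\<chi> i. exp ((a * s + b) * x$i))) has_vector_derivative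
        diag_mat (\<chi> i. a * (exp ((a * t + b) * x$i) * x$i))) (at t within T)"
    by (rule mat_vector_derivative) (auto simp: diag_mat_def intro!: derivative_eq_intros)
  have D: "((\<lambda>s. Q ** diag_mat (\<chi> i. exp ((a * s + b) * x$i)) ** transpose Q) has_vector_derivative
        Q ** diag_mat (\<chi> i. a * (exp ((a * t + b) * x$i) * x$i)) ** transpose Q) (at t within T)"
    by (rule bounded_linear.has_vector_derivative[OF bl_conj inner])
  have eqV: "Q ** diag_mat (\<chi> i. a * (exp ((a * t + b) * x$i) * x$i)) ** transpose Q
       = a *\<^sub>R (mat_exp ((a * t + b) *\<^sub>R X) ** X)"
  proof -
    have "a *\<^sub>R (Q ** diag_mat (\<chi> i. exp ((a * t + b) * x$i) * x$i) ** transpose Q)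
        = Q ** (a *\<^sub>R diag_mat (\<chi> i. exp ((a * t + b) * x$i) * x$i)) ** transpose Q"
      by (simp add: matrix_scalar_ac scalar_matrix_assoc)
    also have "a *\<^sub>R diag_mat (\<chi> i. exp ((a * t + b) * x$i) * x$i) = diag_mat (\<chi> i. a * (exp ((a * t + b) * x$i) * x$i))"
      by (simp add: vec_eq_iff diag_mat_def)
    finally show ?thesis unfolding prodr by simp
  qed
  have eqf: "(\<lambda>s. mat_exp ((a * s + b) *\<^sub>R X)) = (\<lambda>s. Q ** diag_mat (\<chi> i. exp ((a * s + b) * x$i)) ** transpose Q)"
    by (rule ext) (rule rep)
  show "((\<lambda>s. mat_exp ((a * s + b) *\<^sub>R X)) has_vector_derivative
           (a *\<^sub>R (mat_exp ((a * t + b) *\<^sub>R X) ** X))) (at t within T)"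
    using D[folded eqf] by (simp only: eqV)
qed



lemma entry_le_norm: "\<bar>A$i$j\<bar> \<le> norm (A::real^'n^'m)"
  using component_le_norm_cart[of "A$i" j] Finite_Cartesian_Product.norm_nth_le[of A i] by linarith

lemma norm_le_entries: "norm (A::real^'n^'m) \<le> (\<Sum>i\<in>UNIV. \<Sum>j\<in>UNIV. \<bar>A$i$j\<bar>)"
proof -
  have "norm A = L2_set (\<lambda>i. norm (A$i)) UNIV" by (simp add: norm_vec_def)
  also have "\<dots> \<le> (\<Sum>i\<in>UNIV. norm (A$i))" by (rule L2_set_le_sum) auto
  also have "\<dots> \<le> (\<Sum>i\<in>UNIV. \<Sum>j\<in>UNIV. \<bar>A$i$j\<bar>)" by (intro sum_mono norm_le_l1_cart)
  finally show ?thesis .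
qed

lemma sum_bound_const: "(\<And>i. f i \<le> c) \<Longrightarrow> (\<Sum>i\<in>(UNIV::'n::finite set). f i) \<le> real CARD('n) * c"
  using sum_mono[of UNIV f "\<lambda>_. c"] by simp

lemma norm_mult_le:
  fixes A B :: "real^'n^'n"
  shows "norm (A ** B) \<le> real CARD('n)^3 * norm A * norm B"
proof -
  have e: "\<bar>(A ** B)$i$j\<bar> \<le> real CARD('n) * (norm A * norm B)" for i j
  proof -
    have "\<bar>(A ** B)$i$j\<bar> = \<bar>\<Sum>k\<in>UNIV. A$i$k * B$k$j\<bar>" by (simp add: matrix_matrix_mult_def)
    also have "\<dots> \<le> (\<Sum>k\<in>UNIV. \<bar>A$i$k\<bar> * \<bar>B$k$j\<bar>)" by (rule order_trans[OF sum_abs]) (simp add: abs_mult)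
    also have "\<dots> \<le> real CARD('n) * (norm A * norm B)"
      by (intro sum_bound_const mult_mono entry_le_norm) auto
    finally show ?thesis .
  qed
  have "norm (A ** B) \<le> (\<Sum>i\<in>UNIV. \<Sum>j\<in>UNIV. \<bar>(A ** B)$i$j\<bar>)" by (rule norm_le_entries)
  also have "\<dots> \<le> real CARD('n) * (real CARD('n) * (real CARD('n) * (norm A * norm B)))"
    by (intro sum_bound_const e)
  finally show ?thesis by (simp add: power3_eq_cube mult_ac)
qed

lemma orth_entry:
  fixes Q :: "real^'n^'n"
  assumes "orthogonal_matrix Q" shows "\<bar>Q$i$j\<bar> \<le> 1"
proof -
  have "norm (row i Q) = 1" using assms by (simp add: orthogonal_matrix_orthonormal_rows)
  moreover have "row i Q = Q$i" by (simp add: row_def vec_eq_iff)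
  ultimately show ?thesis using component_le_norm_cart[of "Q$i" j] by simp
qed

lemma conj_diag_entry:
  fixes Q :: "real^'n^'n"
  shows "(Q ** diag_mat d ** transpose Q)$a$b = (\<Sum>k\<in>UNIV. Q$a$k * d$k * Q$b$k)"
  by (simp add: matrix_matrix_mult_def[of "Q ** diag_mat d"] diag_mult_right_entry transpose_def)

lemma eig_bound:
  fixes Q X :: "real^'n^'n"
  assumes Q: "orthogonal_matrix Q" and X: "X = Q ** diag_mat x ** transpose Q"
  shows "\<bar>x$k\<bar> \<le> real CARD('n)^2 * norm X"
proof -
  have "transpose Q ** X ** Q = diag_mat x"
    unfolding X using Q by (simp add: matrix_mul_assoc[symmetric] orth_simps)
  then have "x$k = (transpose Q ** X ** Q)$k$k" by (simp add: diag_mat_def)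
  also have "\<dots> = (\<Sum>l\<in>UNIV. \<Sum>j\<in>UNIV. Q$j$k * X$j$l * Q$l$k)"
    by (simp add: matrix_matrix_mult_def transpose_def sum_distrib_right)
  finally have "\<bar>x$k\<bar> = \<bar>\<Sum>l\<in>UNIV. \<Sum>j\<in>UNIV. Q$j$k * X$j$l * Q$l$k\<bar>" by simp
  also have "\<dots> \<le> (\<Sum>l\<in>UNIV. \<bar>\<Sum>j\<in>UNIV. Q$j$k * X$j$l * Q$l$k\<bar>)" by (rule sum_abs)
  also have "\<dots> \<le> (\<Sum>l\<in>UNIV. \<Sum>j\<in>UNIV. \<bar>Q$j$k * X$j$l * Q$l$k\<bar>)" by (intro sum_mono sum_abs)
  also have "\<dots> \<le> real CARD('n) * (real CARD('n) * norm X)"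
  proof (intro sum_bound_const)
    fix l j
    have "\<bar>Q$j$k * X$j$l * Q$l$k\<bar> = \<bar>Q$j$k\<bar> * \<bar>X$j$l\<bar> * \<bar>Q$l$k\<bar>" by (simp add: abs_mult)
    also have "\<dots> \<le> 1 * norm X * 1"
      by (intro mult_mono orth_entry[OF Q] entry_le_norm) auto
    finally show "\<bar>Q$j$k * X$j$l * Q$l$k\<bar> \<le> norm X" by simp
  qed
  finally show ?thesis by (simp add: power2_eq_square mult_ac)
qed

lemma exp_bound:
  fixes X :: "real^'n^'n"
  assumes "sym_mat X" and "norm X \<le> R"
  shows "norm (mat_exp X) \<le> real CARD('n)^3 * exp (real CARD('n)^2 * R)"
proof -
  obtain Q x where Q: "orthogonal_matrix Q" "X = Q ** diag_mat x ** transpose Q" using sym_decomp[OF assms(1)] .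
  have E: "mat_exp X = Q ** diag_mat (\<chi> i. exp (x$i)) ** transpose Q" by (rule exp_rep[OF Q])
  have ek: "exp (x$k) \<le> exp (real CARD('n)^2 * R)" for k
  proof -
    have "x$k \<le> real CARD('n)^2 * norm X" using eig_bound[OF Q, of k] by linarith
    also have "\<dots> \<le> real CARD('n)^2 * R" using assms(2) by (intro mult_left_mono) auto
    finally show ?thesis by simp
  qed
  have e: "\<bar>mat_exp X $a$b\<bar> \<le> real CARD('n) * exp (real CARD('n)^2 * R)" for a b
  proof -
    have "\<bar>mat_exp X $a$b\<bar> = \<bar>\<Sum>k\<in>UNIV. Q$a$k * exp (x$k) * Q$b$k\<bar>" by (simp add: E conj_diag_entry)
    also have "\<dots> \<le> (\<Sum>k\<in>UNIV. \<bar>Q$a$k * exp (x$k) * Q$b$k\<bar>)" by (rule sum_abs)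
    also have "\<dots> \<le> real CARD('n) * exp (real CARD('n)^2 * R)"
    proof (intro sum_bound_const)
      fix k
      have "\<bar>Q$a$k * exp (x$k) * Q$b$k\<bar> = \<bar>Q$a$k\<bar> * exp (x$k) * \<bar>Q$b$k\<bar>" by (simp add: abs_mult)
      also have "\<dots> \<le> 1 * exp (real CARD('n)^2 * R) * 1"
        by (intro mult_mono orth_entry[OF Q(1)] ek) auto
      finally show "\<bar>Q$a$k * exp (x$k) * Q$b$k\<bar> \<le> exp (real CARD('n)^2 * R)" by simp
    qed
    finally show ?thesis .
  qed
  have "norm (mat_exp X) \<le> (\<Sum>a\<in>UNIV. \<Sum>b\<in>UNIV. \<bar>mat_exp X $a$b\<bar>)" by (rule norm_le_entries)
  also have "\<dots> \<le> real CARD('n) * (real CARD('n) * (real CARD('n) * exp (real CARD('n)^2 * R)))"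
    by (intro sum_bound_const e)
  finally show ?thesis by (simp add: power3_eq_cube mult_ac)
qed

lemma matrix_diff_rdistrib: "((A::real^'n^'m) - B) ** C = A ** C - B ** C"
  by (vector matrix_matrix_mult_def sum_subtractf[symmetric] field_simps)

lemma matrix_diff_ldistrib: "(A::real^'n^'m) ** (B - C) = A ** B - A ** C"
  by (vector matrix_matrix_mult_def sum_subtractf[symmetric] field_simps)

lemma sym_scale: "sym_mat X \<Longrightarrow> sym_mat (c *\<^sub>R (X::real^'n^'n))"
  by (simp add: sym_mat_def transpose_scalar)

lemma prod_deriv:
  fixes M N :: "real^'n^'n"
  assumes sM: "sym_mat M" and sN: "sym_mat N"
  shows "((\<lambda>r. mat_exp (r *\<^sub>R N) ** mat_exp ((1 - r) *\<^sub>R M)) has_vector_derivative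
          (mat_exp (r *\<^sub>R N) ** (N - M) ** mat_exp ((1 - r) *\<^sub>R M))) (at r)"
proof -
  have d1: "((\<lambda>s. mat_exp (s *\<^sub>R N)) has_vector_derivative (mat_exp (r *\<^sub>R N) ** N)) (at r)"
    using exp_ray_deriv(1)[OF sN, of 1 0 r UNIV] by simp
  have d2: "((\<lambda>s. mat_exp ((1 - s) *\<^sub>R M)) has_vector_derivative (- (mat_exp ((1 - r) *\<^sub>R M) ** M))) (at r)"
    using exp_ray_deriv(1)[OF sM, of "-1" 1 r UNIV] by simp
  have "((\<lambda>r. mat_exp (r *\<^sub>R N) ** mat_exp ((1 - r) *\<^sub>R M)) has_vector_derivative
          (mat_exp (r *\<^sub>R N) ** (- (mat_exp ((1 - r) *\<^sub>R M) ** M)) + (mat_exp (r *\<^sub>R N) ** N) ** mat_exp ((1 - r) *\<^sub>R M))) (at r)"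
    by (rule bounded_bilinear.has_vector_derivative[OF bbl_mult d1 d2])
  moreover have "mat_exp (r *\<^sub>R N) ** (- (mat_exp ((1 - r) *\<^sub>R M) ** M)) + (mat_exp (r *\<^sub>R N) ** N) ** mat_exp ((1 - r) *\<^sub>R M)
      = mat_exp (r *\<^sub>R N) ** (N - M) ** mat_exp ((1 - r) *\<^sub>R M)"
  proof -
    have c: "mat_exp ((1 - r) *\<^sub>R M) ** M = M ** mat_exp ((1 - r) *\<^sub>R M)" by (rule exp_ray_deriv(2)[OF sM])
    have n: "A ** (- B) = - (A ** B)" for A B :: "real^'n^'n"
      using matrix_diff_ldistrib[of A 0 B] by simp
    show ?thesis unfolding c n
      by (simp add: matrix_diff_rdistrib matrix_diff_ldistrib matrix_mul_assoc)
  qed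
  ultimately show ?thesis by simp
qed



lemma exp_lipschitz:
  fixes M N :: "real^'n^'n"
  assumes sM: "sym_mat M" and sN: "sym_mat N" and nM: "norm M \<le> R" and nN: "norm N \<le> R"
  shows "norm (mat_exp N - mat_exp M) \<le> real CARD('n)^6 * (real CARD('n)^3 * exp (real CARD('n)^2 * R))^2 * norm (N - M)"
proof -
  define B where "B = real CARD('n)^3 * exp (real CARD('n)^2 * R)"
  have B0: "0 \<le> B" by (simp add: B_def)
  define K where "K = real CARD('n)^6 * B^2 * norm (N - M)"
  define g where "g r = mat_exp (r *\<^sub>R N) ** mat_exp ((1 - r) *\<^sub>R M)" for r
  define g' where "g' r = mat_exp (r *\<^sub>R N) ** (N - M) ** mat_exp ((1 - r) *\<^sub>R M)" for r
  have deriv: "(g has_vector_derivative g' r) (at r)" for r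
    unfolding g_def g'_def by (rule prod_deriv[OF sM sN])
  have cont: "continuous_on {0..1} g"
    by (rule continuous_at_imp_continuous_on) (use deriv has_vector_derivative_continuous in blast)
  have bnd: "norm (g' r) \<le> K" if "0 < r" "r < 1" for r
  proof -
    have b1: "norm (mat_exp (r *\<^sub>R N)) \<le> B" unfolding B_def
      by (rule exp_bound[OF sym_scale[OF sN]]) (use that nN in \<open>auto intro: order_trans[OF mult_left_le_one_le]\<close>)
    have b2: "norm (mat_exp ((1 - r) *\<^sub>R M)) \<le> B" unfolding B_def
      by (rule exp_bound[OF sym_scale[OF sM]]) (use that nM in \<open>auto intro: order_trans[OF mult_left_le_one_le]\<close>)
    have "norm (g' r) \<le> real CARD('n)^3 * norm (mat_exp (r *\<^sub>R N) ** (N - M)) * norm (mat_exp ((1 - r) *\<^sub>R M))"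
      unfolding g'_def by (rule norm_mult_le)
    also have "\<dots> \<le> real CARD('n)^3 * (real CARD('n)^3 * B * norm (N - M)) * B"
      using B0 by (intro mult_mono order_trans[OF norm_mult_le] mult_right_mono b1 b2) auto
    also have "\<dots> = K" by (simp add: K_def power2_eq_square mult_ac)
    finally show ?thesis .
  qed
  have "norm (g 1 - g 0) \<le> 1 * K - 0 * K"
    by (rule differentiable_bound_general[of 0 1 g "\<lambda>r. r * K" g' "\<lambda>_. K"])
       (use cont deriv bnd in \<open>auto intro!: continuous_intros derivative_eq_intros\<close>)
  moreover have "g 1 = mat_exp N" "g 0 = mat_exp M"
    using exp_zero_scale[OF sM] by (simp_all add: g_def)
  ultimately show ?thesis by (simp add: K_def B_def)
qed



lemma deriv_exp_real: "deriv exp (x::real) = exp x"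
  by (rule DERIV_imp_deriv) (rule DERIV_exp)

lemma exp_taylor:
  fixes M N :: "real^'n^'n"
  assumes sM: "sym_mat M" and sN: "sym_mat N" and h1: "norm (N - M) \<le> 1"
  shows "norm (mat_exp N - mat_exp M - dmat_fun exp M (N - M))
     \<le> real CARD('n)^12 * (real CARD('n)^3 * exp (real CARD('n)^2 * (norm M + 1)))^3 * (norm (N - M))^2"
proof -
  define R where "R = norm M + 1"
  define B where "B = real CARD('n)^3 * exp (real CARD('n)^2 * R)"
  have B0: "0 \<le> B" by (simp add: B_def)
  define H where "H = N - M"
  obtain Q m where Q: "orthogonal_matrix Q" "M = Q ** diag_mat m ** transpose Q" using sym_decomp[OF sM] .
  define Y where "Y = transpose Q ** H ** Q"
  have HY: "H = Q ** Y ** transpose Q" unfolding Y_def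
    by (simp add: matrix_mul_assoc[symmetric] orth_simps[OF Q(1)])
  define cc where "cc a b s = (if m$a = m$b then s * exp (m$a)
      else (exp (s * m$a + (1 - s) * m$b) - exp (m$b)) * inverse (m$a - m$b))" for a b s
  define psi where "psi s = Q ** (\<chi> a b. cc a b s * Y$a$b) ** transpose Q" for s
  have psi_d: "(psi has_vector_derivative (mat_exp (s *\<^sub>R M) ** H ** mat_exp ((1 - s) *\<^sub>R M))) (at s)" for s
  proof -
    have inner: "((\<lambda>s. \<chi> a b. cc a b s * Y$a$b) has_vector_derivative
        (\<chi> a b. exp (s * m$a + (1 - s) * m$b) * Y$a$b)) (at s)"
    proof (rule mat_vector_derivative)
      fix a b
      show "((\<lambda>s. (\<chi> a b. cc a b s * Y$a$b) $ a $ b) has_real_derivative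
          (\<chi> a b. exp (s * m$a + (1 - s) * m$b) * Y$a$b) $ a $ b) (at s)"
      proof (cases "m$a = m$b")
        case True
        have "s * m$b + (1 - s) * m$b = m$b" by (simp add: algebra_simps)
        then show ?thesis using True by (simp add: cc_def) (auto intro!: derivative_eq_intros)
      next
        case False
        have d: "((\<lambda>s. (exp (s * m$a + (1 - s) * m$b) - exp (m$b)) * inverse (m$a - m$b) * Y$a$b) has_real_derivative
            (exp (s * m$a + (1 - s) * m$b) * (m$a - m$b) * inverse (m$a - m$b) * Y$a$b)) (at s)"
          by (auto intro!: derivative_eq_intros simp: algebra_simps)
        have e: "exp (s * m$a + (1 - s) * m$b) * (m$a - m$b) * inverse (m$a - m$b) * Y$a$b
            = exp (s * m$a + (1 - s) * m$b) * Y$a$b" using False by simp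
        show ?thesis using d[unfolded e] False by (simp add: cc_def)
      qed
    qed
    have D: "(psi has_vector_derivative Q ** (\<chi> a b. exp (s * m$a + (1 - s) * m$b) * Y$a$b) ** transpose Q) (at s)"
      unfolding psi_def by (rule bounded_linear.has_vector_derivative[OF bl_conj inner])
    have eq: "Q ** (\<chi> a b. exp (s * m$a + (1 - s) * m$b) * Y$a$b) ** transpose Q
        = mat_exp (s *\<^sub>R M) ** H ** mat_exp ((1 - s) *\<^sub>R M)"
    proof -
      have e1: "mat_exp (s *\<^sub>R M) = Q ** diag_mat (\<chi> i. exp (s * m$i)) ** transpose Q"
        using exp_rep[OF Q(1) decomp_scale[OF Q(2)]] by simp
      have e2: "mat_exp ((1-s) *\<^sub>R M) = Q ** diag_mat (\<chi> i. exp ((1-s) * m$i)) ** transpose Q"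
        using exp_rep[OF Q(1) decomp_scale[OF Q(2)]] by simp
      have "mat_exp (s *\<^sub>R M) ** H ** mat_exp ((1 - s) *\<^sub>R M)
          = Q ** (diag_mat (\<chi> i. exp (s * m$i)) ** Y ** diag_mat (\<chi> i. exp ((1-s) * m$i))) ** transpose Q"
        unfolding e1 e2 HY by (simp only: conj_mult[OF Q(1)])
      also have "diag_mat (\<chi> i. exp (s * m$i)) ** Y ** diag_mat (\<chi> i. exp ((1-s) * m$i))
          = (\<chi> a b. exp (s * m$a + (1 - s) * m$b) * Y$a$b)"
        by (simp add: vec_eq_iff diag_mult_right_entry diag_mult_left_entry exp_add mult_ac)
      finally show ?thesis by simp
    qed
    show ?thesis using D by (simp only: eq)
  qed
  have psi0: "psi 0 = 0"
  proof -
    have "(\<chi> a b. cc a b 0 * Y$a$b) = 0" by (simp add: vec_eq_iff cc_def)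
    then show ?thesis by (simp add: psi_def)
  qed
  have psi1: "psi 1 = dmat_fun exp M H"
  proof -
    have "cc a b 1 = divdiff exp (m$a) (m$b)" for a b
      by (cases "m$a = m$b") (simp_all add: cc_def divdiff_def deriv_exp_real field_simps)
    then show ?thesis
      by (simp add: psi_def dmat_fun_def spec_apply2_eq[OF Q] Y_def)
  qed
  define phi where "phi s = mat_exp (s *\<^sub>R N) ** mat_exp ((1 - s) *\<^sub>R M) - psi s" for s
  have phi_d: "(phi has_vector_derivative ((mat_exp (s *\<^sub>R N) - mat_exp (s *\<^sub>R M)) ** H ** mat_exp ((1 - s) *\<^sub>R M))) (at s)" for s
  proof -
    have "(phi has_vector_derivative (mat_exp (s *\<^sub>R N) ** (N - M) ** mat_exp ((1 - s) *\<^sub>R M)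
             - mat_exp (s *\<^sub>R M) ** H ** mat_exp ((1 - s) *\<^sub>R M))) (at s)"
      unfolding phi_def by (intro has_vector_derivative_diff prod_deriv[OF sM sN] psi_d)
    then show ?thesis by (simp add: matrix_diff_rdistrib H_def)
  qed
  define K where "K = real CARD('n)^12 * B^3 * (norm H)^2"
  have nN: "norm N \<le> R"
  proof -
    have "norm N \<le> norm M + norm (N - M)" using norm_triangle_ineq[of M "N - M"] by simp
    then show ?thesis using h1 by (simp add: R_def)
  qed
  have nM: "norm M \<le> R" by (simp add: R_def)
  have bnd: "norm ((mat_exp (s *\<^sub>R N) - mat_exp (s *\<^sub>R M)) ** H ** mat_exp ((1 - s) *\<^sub>R M)) \<le> K"
    if s: "0 < s" "s < 1" for s
  proof -
    have sc: "norm (c *\<^sub>R X) \<le> R" if "0 \<le> c" "c \<le> 1" "norm X \<le> R" for c and X :: "real^'n^'n"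
      using that by (auto intro: order_trans[OF mult_left_le_one_le])
    have b2: "norm (mat_exp ((1 - s) *\<^sub>R M)) \<le> B" unfolding B_def
      by (rule exp_bound[OF sym_scale[OF sM]]) (use s nM sc in auto)
    have l: "norm (mat_exp (s *\<^sub>R N) - mat_exp (s *\<^sub>R M)) \<le> real CARD('n)^6 * B^2 * norm (s *\<^sub>R N - s *\<^sub>R M)"
      unfolding B_def by (rule exp_lipschitz[OF sym_scale[OF sM] sym_scale[OF sN]]) (use s nM nN sc in auto)
    have sH: "norm (s *\<^sub>R N - s *\<^sub>R M) \<le> norm H"
      using s by (simp add: H_def scaleR_diff_right[symmetric] mult_left_le_one_le)
    have l2: "norm (mat_exp (s *\<^sub>R N) - mat_exp (s *\<^sub>R M)) \<le> real CARD('n)^6 * B^2 * norm H"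
      using l sH B0 by (meson order_trans mult_left_mono zero_le_power zero_le_mult_iff of_nat_0_le_iff)
    have "norm ((mat_exp (s *\<^sub>R N) - mat_exp (s *\<^sub>R M)) ** H ** mat_exp ((1 - s) *\<^sub>R M))
        \<le> real CARD('n)^3 * norm ((mat_exp (s *\<^sub>R N) - mat_exp (s *\<^sub>R M)) ** H) * norm (mat_exp ((1 - s) *\<^sub>R M))"
      by (rule norm_mult_le)
    also have "\<dots> \<le> real CARD('n)^3 * (real CARD('n)^3 * (real CARD('n)^6 * B^2 * norm H) * norm H) * B"
      using B0 by (intro mult_mono order_trans[OF norm_mult_le] mult_right_mono l2 b2) auto
    also have "\<dots> = K" unfolding K_def by algebra
    finally show ?thesis .
  qed
  have cont: "continuous_on {0..1} phi"
    by (rule continuous_at_imp_continuous_on) (use phi_d has_vector_derivative_continuous in blast)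
  have "norm (phi 1 - phi 0) \<le> 1 * K - 0 * K"
    by (rule differentiable_bound_general[of 0 1 phi "\<lambda>r. r * K" _ "\<lambda>_. K"])
       (use cont phi_d bnd in \<open>auto intro!: continuous_intros derivative_eq_intros\<close>)
  moreover have "phi 1 - phi 0 = mat_exp N - mat_exp M - dmat_fun exp M (N - M)"
    using exp_zero_scale[OF sM] exp_zero_scale[OF sN] by (simp add: phi_def psi0 psi1 H_def)
  ultimately show ?thesis by (simp add: K_def B_def R_def H_def)
qed



lemma exp_has_derivative:
  fixes M :: "real^'n^'n"
  assumes sM: "sym_mat M"
  shows "(mat_exp has_derivative dmat_fun exp M) (at M within {X. sym_mat X})"
proof -
  define C where "C = real CARD('n)^12 * (real CARD('n)^3 * exp (real CARD('n)^2 * (norm M + 1)))^3"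
  have C0: "0 \<le> C" by (simp add: C_def)
  have "dmat_fun exp M = spec_apply2 (divdiff exp) M" by (rule ext) (simp add: dmat_fun_def)
  then have bl: "bounded_linear (dmat_fun exp M)" by (simp add: bl_spec_apply2)
  show ?thesis unfolding has_derivative_within'
  proof (intro conjI allI impI bl)
    fix e :: real assume e: "e > 0"
    define d where "d = min 1 (e / (C + 1))"
    have d0: "d > 0" using e C0 by (simp add: d_def)
    show "\<exists>d>0. \<forall>x'\<in>{X. sym_mat X}. 0 < norm (x' - M) \<and> norm (x' - M) < d \<longrightarrow>
      norm (mat_exp x' - mat_exp M - dmat_fun exp M (x' - M)) / norm (x' - M) < e"
    proof (intro exI[of _ d] conjI d0 ballI impI)
      fix N assume N: "N \<in> {X. sym_mat X}" and h: "0 < norm (N - M) \<and> norm (N - M) < d"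
      have h1: "norm (N - M) \<le> 1" using h by (simp add: d_def)
      have "norm (mat_exp N - mat_exp M - dmat_fun exp M (N - M)) \<le> C * (norm (N - M))^2"
        using exp_taylor[OF sM _ h1] N by (simp add: C_def)
      then have "norm (mat_exp N - mat_exp M - dmat_fun exp M (N - M)) / norm (N - M) \<le> C * norm (N - M)"
        using h by (simp add: divide_le_eq power2_eq_square mult_ac)
      also have "\<dots> \<le> C * (e / (C + 1))"
        using h C0 by (intro mult_left_mono) (auto simp: d_def)
      also have "\<dots> < e" using e C0 by (simp add: field_simps)
      finally show "norm (mat_exp N - mat_exp M - dmat_fun exp M (N - M)) / norm (N - M) < e" .
    qed
  qed
qed



lemma cosh_sinh_exp:
  fixes a b :: real
  shows "(exp a - exp b) * cosh ((a - b) / 2) = (exp a + exp b) * sinh ((a - b) / 2)"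
proof -
  define c where "c = (a + b) / 2"
  define d where "d = (a - b) / 2"
  have ea: "exp a = exp c * exp d" by (simp add: c_def d_def field_simps flip: exp_add)
  have eb: "exp b = exp c * exp (- d)" by (simp add: c_def d_def field_simps flip: exp_add)
  show ?thesis unfolding ea eb d_def[symmetric] cosh_def sinh_def by (simp add: algebra_simps)
qed

lemma scalar_key:
  fixes a b l1 l2 :: real
  shows "divdiff exp a b * ((a - b) * ((l1 - l2) / 2 - langevin ((a - b) / 2) * ((l1 + l2) / 2)) - (l1 + l2))
         = - (l1 * exp b + exp a * l2)"
proof (cases "a = b")
  case True
  then show ?thesis by (simp add: divdiff_def deriv_exp_real algebra_simps)
next
  case False
  define d where "d = (a - b) / 2"
  have d0: "d \<noteq> 0" using False by (simp add: d_def)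
  have s0: "sinh d \<noteq> 0" using d0 by simp
  have ab: "a - b = 2 * d" by (simp add: d_def)
  have ab0: "a - b \<noteq> 0" using False by simp
  have cs: "(exp a - exp b) * cosh d = (exp a + exp b) * sinh d" using cosh_sinh_exp[of a b] by (simp add: d_def)
  have "divdiff exp a b * ((a - b) * ((l1 - l2) / 2 - langevin d * ((l1 + l2) / 2)) - (l1 + l2))
      = (exp a - exp b) * (l1 - l2) / 2 - (exp a - exp b) * cosh d / sinh d * (l1 + l2) / 2"
  proof -
    have dd: "divdiff exp a b = (exp a - exp b) / (2 * d)" using False by (simp add: divdiff_def ab)
    have ll: "langevin d = cosh d / sinh d - 1 / d" using d0 by (simp add: langevin_def)
    show ?thesis unfolding dd ll ab using d0 s0 by (simp add: field_simps)
  qed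
  also have "\<dots> = (exp a - exp b) * (l1 - l2) / 2 - (exp a + exp b) * (l1 + l2) / 2"
    using cs s0 by (simp add: field_simps)
  also have "\<dots> = - (l1 * exp b + exp a * l2)" by (simp add: field_simps)
  finally show ?thesis by (simp add: d_def)
qed

lemma scalar_log:
  fixes a b :: real
  shows "divdiff ln (exp a) (exp b) * divdiff exp a b = 1"
proof (cases "a = b")
  case True
  have "deriv ln (exp a) = inverse (exp a)" by (rule DERIV_imp_deriv, rule DERIV_ln) simp
  then show ?thesis using True by (simp add: divdiff_def deriv_exp_real)
next
  case False
  then have "exp a \<noteq> exp b" by simp
  then show ?thesis using False by (simp add: divdiff_def)
qed



definition tq :: "real^'n^'n \<Rightarrow> real^'n^'n \<Rightarrow> real^'n^'n" where
  "tq Q X = transpose Q ** X ** Q"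

lemma tq_inv: "orthogonal_matrix Q \<Longrightarrow> Q ** tq Q X ** transpose Q = X"
  unfolding tq_def by (simp add: matrix_mul_assoc[symmetric] orth_simps)

lemma tq_inj: "orthogonal_matrix Q \<Longrightarrow> tq Q X = tq Q Y \<Longrightarrow> X = Y"
  by (metis tq_inv)

lemma tq_add: "tq Q (X + Y) = tq Q X + tq Q Y"
  unfolding tq_def by (simp add: matrix_add_ldistrib matrix_add_rdistrib')

lemma tq_diff: "tq Q (X - Y) = tq Q X - tq Q Y"
  unfolding tq_def by (simp add: matrix_diff_ldistrib matrix_diff_rdistrib)

lemma tq_scale: "tq Q (c *\<^sub>R X) = c *\<^sub>R tq Q X"
  unfolding tq_def by (simp add: matrix_scalar_ac scalar_matrix_assoc)

lemma tq_mult: "orthogonal_matrix Q \<Longrightarrow> tq Q (X ** Y) = tq Q X ** tq Q Y"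
  unfolding tq_def by (simp add: matrix_mul_assoc[symmetric] orth_simps)

lemma tq_transpose: "tq Q (transpose X) = transpose (tq Q X)"
  unfolding tq_def by (simp add: matrix_transpose_mul matrix_mul_assoc)

lemma tq_conj: "orthogonal_matrix Q \<Longrightarrow> tq Q (Q ** Z ** transpose Q) = Z"
  unfolding tq_def by (simp add: matrix_mul_assoc[symmetric] orth_simps)

lemma tq_spec:
  assumes "orthogonal_matrix Q" "M = Q ** diag_mat m ** transpose Q"
  shows "tq Q (spec_apply2 F M X) = (\<chi> i j. F (m$i) (m$j) * tq Q X $i$j)"
  using spec_apply2_eq[OF assms, of F X] tq_conj[OF assms(1)] by (simp add: tq_def)

lemma transpose_entry: "transpose A $ i $ j = A $ j $ i"
  by (simp add: transpose_def)



lemma key_alg: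
  fixes Gp L Z :: "real^'n^'n"
  assumes sG: "sym_mat Gp"
  shows "let Ap = mat_exp Gp;
        W = (1/2) *\<^sub>R (L - transpose L);
        Dm = (1/2) *\<^sub>R (L + transpose L);
        Om = W - Ad_fun langevin Gp Dm;
        Glog = Z + 2 *\<^sub>R Ad Gp Om;
        Aup = dmat_fun exp Gp Z - L ** Ap - Ap ** transpose L
    in Glog = 2 *\<^sub>R Dm + dmat_fun ln Ap Aup \<and> Aup = dmat_fun exp Gp (Glog - 2 *\<^sub>R Dm)"
proof -
  obtain Q g where Q: "orthogonal_matrix Q" "Gp = Q ** diag_mat g ** transpose Q" using sym_decomp[OF sG] .
  define e where "e = (\<chi> i. exp (g$i))"
  define Ap where "Ap = mat_exp Gp"
  have Ap: "Ap = Q ** diag_mat e ** transpose Q" unfolding Ap_def e_def by (rule exp_rep[OF Q])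
  define W where "W = (1/2) *\<^sub>R (L - transpose L)"
  define Dm where "Dm = (1/2) *\<^sub>R (L + transpose L)"
  define Om where "Om = W - Ad_fun langevin Gp Dm"
  define Glog where "Glog = Z + 2 *\<^sub>R Ad Gp Om"
  define Aup where "Aup = dmat_fun exp Gp Z - L ** Ap - Ap ** transpose L"
  define l where "l = tq Q L"
  define z where "z = tq Q Z"
  have tG: "tq Q Gp = diag_mat g" using tq_conj[OF Q(1)] Q(2) by simp
  have tA: "tq Q Ap = diag_mat e" using tq_conj[OF Q(1)] Ap by simp
  have tD: "tq Q (dmat_fun f Gp X) = (\<chi> i j. divdiff f (g$i) (g$j) * tq Q X $i$j)" for f X
    unfolding dmat_fun_def by (rule tq_spec[OF Q])
  have tAd: "tq Q (Ad Gp X) = (\<chi> i j. (g$i - g$j) / 2 * tq Q X $i$j)" for X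
    unfolding Ad_def tq_scale tq_diff tq_mult[OF Q(1)] tG
    by (simp add: vec_eq_iff diag_mult_left_entry diag_mult_right_entry algebra_simps)
  have tAdf: "tq Q (Ad_fun h Gp X) = (\<chi> i j. h ((g$i - g$j) / 2) * tq Q X $i$j)" for h X
    unfolding Ad_fun_def by (rule tq_spec[OF Q])
  have tDm: "tq Q Dm $i$j = (l$i$j + l$j$i) / 2" for i j
    by (simp add: Dm_def tq_scale tq_add tq_transpose l_def transpose_entry)
  have tW: "tq Q W $i$j = (l$i$j - l$j$i) / 2" for i j
    by (simp add: W_def tq_scale tq_diff tq_transpose l_def transpose_entry)
  have tOm: "tq Q Om $i$j = (l$i$j - l$j$i) / 2 - langevin ((g$i - g$j) / 2) * ((l$i$j + l$j$i) / 2)" for i j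
    by (simp add: Om_def tq_diff tAdf tW tDm)
  have conj2: "Aup = dmat_fun exp Gp (Glog - 2 *\<^sub>R Dm)"
  proof (rule tq_inj[OF Q(1)])
    show "tq Q Aup = tq Q (dmat_fun exp Gp (Glog - 2 *\<^sub>R Dm))"
    proof -
      have "tq Q Aup $i$j = tq Q (dmat_fun exp Gp (Glog - 2 *\<^sub>R Dm)) $i$j" for i j
      proof -
        have lhs: "tq Q Aup $i$j = divdiff exp (g$i) (g$j) * z$i$j - l$i$j * exp (g$j) - exp (g$i) * l$j$i"
          by (simp add: Aup_def tq_diff tD tq_mult[OF Q(1)] tA tq_transpose diag_mult_left_entry
              diag_mult_right_entry transpose_entry e_def l_def z_def)
        have rhs: "tq Q (dmat_fun exp Gp (Glog - 2 *\<^sub>R Dm)) $i$j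
            = divdiff exp (g$i) (g$j) * (z$i$j + (g$i - g$j) * tq Q Om $i$j - (l$i$j + l$j$i))"
          by (simp add: tD Glog_def tq_diff tq_add tq_scale tAd tDm z_def field_simps)
        have key: "divdiff exp (g$i) (g$j) * ((g$i - g$j) * ((l$i$j - l$j$i) / 2 - langevin ((g$i - g$j) / 2) * ((l$i$j + l$j$i) / 2)) - (l$i$j + l$j$i))
           = - (l$i$j * exp (g$j) + exp (g$i) * l$j$i)" by (rule scalar_key)
        show ?thesis unfolding lhs rhs tOm using key by (simp add: algebra_simps)
      qed
      then show ?thesis by (simp add: vec_eq_iff)
    qed
  qed
  have conj1: "Glog = 2 *\<^sub>R Dm + dmat_fun ln Ap Aup"
  proof -
    define X0 where "X0 = Glog - 2 *\<^sub>R Dm"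
    have "dmat_fun ln Ap Aup = X0"
    proof (rule tq_inj[OF Q(1)])
      have "tq Q (dmat_fun ln Ap Aup) = (\<chi> i j. divdiff ln (e$i) (e$j) * tq Q Aup $i$j)"
        unfolding dmat_fun_def by (rule tq_spec[OF Q(1) Ap])
      also have "\<dots> = tq Q X0"
        unfolding conj2 tD X0_def[symmetric]
        by (simp add: vec_eq_iff e_def mult.assoc[symmetric] scalar_log)
      finally show "tq Q (dmat_fun ln Ap Aup) = tq Q X0" .
    qed
    then show ?thesis by (simp add: X0_def)
  qed
  show ?thesis unfolding Let_def
    using conj1 conj2 by (simp add: Ap_def W_def Dm_def Om_def Glog_def Aup_def)
qed



theorem mainTheorem14:
  fixes T :: real and U :: "(real \<times> (real^'n::finite)) set"
    and v :: "real \<times> (real^'n) \<Rightarrow> real^'n"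
    and G :: "real \<times> (real^'n) \<Rightarrow> real^'n^'n"
  assumes "open U" and "U \<subseteq> {0<..<T} \<times> UNIV"
    and "smooth_on v U" and "smooth_on G U"
    and "\<And>p. p \<in> U \<Longrightarrow> sym_mat (G p)"
    and "p \<in> U"
  shows
   "let A = (\<lambda>q. mat_exp (G q));
        W = (1/2) *\<^sub>R (grad_v v p - transpose (grad_v v p));
        D = (1/2) *\<^sub>R (grad_v v p + transpose (grad_v v p));
        Omega = W - Ad_fun langevin (G p) D;
        Glog = dt G p + convect v G p + 2 *\<^sub>R Ad (G p) Omega;
        Aup = dt A p + convect v A p - grad_v v p ** A p - A p ** transpose (grad_v v p)
    in Glog = 2 *\<^sub>R D + dmat_fun ln (A p) Aup
     \<and> Aup = dmat_fun exp (G p) (Glog - 2 *\<^sub>R D)"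
proof -
  have sG: "sym_mat (G p)" using assms(5,6) .
  have "Ck_on (Suc 0) G U" using assms(4) by (simp add: smooth_on_def)
  then have "G differentiable_on U" by simp
  then have "G differentiable (at p within U)" using assms(6) by (simp add: differentiable_on_def)
  then have "G differentiable (at p)" using at_within_open[OF assms(6,1)] by simp
  define G' where "G' = frechet_derivative G (at p)"
  have dG: "(G has_derivative G') (at p)" unfolding G'_def
    using \<open>G differentiable (at p)\<close> frechet_derivative_works by blast
  have "((\<lambda>q. mat_exp (G q)) has_derivative (\<lambda>h. dmat_fun exp (G p) (G' h))) (at p within U)"
  proof (rule has_derivative_in_compose2[of "{X. sym_mat X}" mat_exp "\<lambda>X. dmat_fun exp X"])
    show "\<And>x. x \<in> {X. sym_mat X} \<Longrightarrow> (mat_exp has_derivative dmat_fun exp x) (at x within {X. sym_mat X})"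
      using exp_has_derivative by blast
    show "G ` U \<subseteq> {X. sym_mat X}" using assms(5) by blast
    show "p \<in> U" by (rule assms(6))
    show "(G has_derivative G') (at p within U)" using dG by (rule has_derivative_at_withinI)
  qed
  then have dA: "((\<lambda>q. mat_exp (G q)) has_derivative (\<lambda>h. dmat_fun exp (G p) (G' h))) (at p)"
    using at_within_open[OF assms(6,1)] by simp
  have fA: "frechet_derivative (\<lambda>q. mat_exp (G q)) (at p) = (\<lambda>h. dmat_fun exp (G p) (G' h))"
    using frechet_derivative_at[OF dA] by simp
  have bl: "bounded_linear (dmat_fun exp (G p))"
    using exp_has_derivative[OF sG] has_derivative_bounded_linear by blast
  define Z where "Z = dt G p + convect v G p"
  have AZ: "dt (\<lambda>q. mat_exp (G q)) p + convect v (\<lambda>q. mat_exp (G q)) p = dmat_fun exp (G p) Z"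
    unfolding dt_def convect_def fA Z_def G'_def[symmetric]
    by (simp add: linear_add[OF bounded_linear.linear[OF bl]])
  show ?thesis
    using key_alg[OF sG, of "grad_v v p" Z] unfolding Let_def AZ Z_def[symmetric] .
qed

end
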